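(* Let $q$ be a prime power with $\gcd(3,q)=1$. Let $\omega\in\overline{\mathbb{F}}_q$ satisfy $\omega^2+\omega+1=0$, and let $\rho(X)=(\omega X+1)/(X+\omega)$, viewed as a map on $\mathbb{P}^1(\overline{\mathbb{F}}_q)$. Then: (i) if $q\equiv1\pmod 3$, then $\rho$ permutes both $\mathbb{P}^1(\mathbb{F}_q)$ and $\mu_{q+1}$; (ii) if $q\equiv 2\pmod 3$, then $\rho$ maps $\mathbb{P}^1(\mathbb{F}_q)$ onto $\mu_{q+1}$ and maps $\mu_{q+1}$ onto $\mathbb{P}^1(\mathbb{F}_q)$; (iii) if $q$ is even, then $\rho$ is an involution, i.e. $\rho^{-1}=\rho$.
   Context: $\overline{\mathbb{F}}_q$ is an algebraic closure of $\mathbb{F}_q$. For a subfield $K$, $\mathbb{P}^1(K)=K\cup\{\infty\}$. $\mu_{q+1}$ is the set of $(q+1)$-th roots of unity in $\overline{\mathbb{F}}_q$. *)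

theory Defs
  imports "HOL-Computational_Algebra.Polynomial"
begin

text \<open>Points of the projective line P^1(K) over a field K are represented as
  K option: Some x is the affine point x, None is the point at infinity.\<close>

definition rho :: "'a::field \<Rightarrow> 'a option \<Rightarrow> 'a option" where
  "rho \<omega> P = (case P of
       None \<Rightarrow> Some \<omega>
     | Some x \<Rightarrow> (if x + \<omega> = 0 then None else Some ((\<omega> * x + 1) / (x + \<omega>))))"

text \<open>P^1(F_q) inside P^1 of an algebraic closure: F_q is the set of roots of X^q - X.\<close>
definition P1_Fq :: "nat \<Rightarrow> 'a::field option set" where
  "P1_Fq q = insert None (Some ` {x. x ^ q = x})"

definition mu :: "nat \<Rightarrow> 'a::field option set" where
  "mu q = Some ` {x. x ^ (q + 1) = 1}"

end

theory Submission
  imports Defs "HOL-Computational_Algebra.Primes"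
begin

lemma rho_inv:
  fixes a :: "'a::field"
  assumes "a^2 \<noteq> 1"
  shows "rho (-a) (rho a P) = P"
proof (cases P)
  case None
  then show ?thesis by (simp add: rho_def)
next
  case (Some x)
  show ?thesis
  proof (cases "x + a = 0")
    case True
    then have "x = -a" by (simp add: eq_neg_iff_add_eq_0)
    then show ?thesis using Some True by (simp add: rho_def)
  next
    case False
    have h1: "1 - a*a \<noteq> 0" using assms by (simp add: power2_eq_square)
    have e: "(a * x + 1) / (x + a) + - a = (1 - a*a) / (x + a)"
      using False by (simp add: field_simps)
    have ne: "(a * x + 1) / (x + a) + - a \<noteq> 0" using e h1 False by simp
    have n: "- a * ((a * x + 1) / (x + a)) + 1 = x * (1 - a*a) / (x + a)"
      using False by (simp add: field_simps)
    have "(- a * ((a * x + 1) / (x + a)) + 1) / ((a * x + 1) / (x + a) + - a) = x"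
      unfolding e n using False h1 by simp
    then show ?thesis using Some False ne by (simp add: rho_def)
  qed
qed

context
  fixes q :: nat
  assumes qpos: "q > 0"
  and F: "\<And>x y :: 'b::field. (x + y) ^ q = x ^ q + y ^ q"
begin

lemma neg: "((-x)::'b) ^ q = - (x ^ q)"
proof -
  have "(x + -x) ^ q = x ^ q + (-x)^q" by (rule F)
  then have "0 = x ^ q + (-x)^q" using qpos by (simp add: zero_power)
  then show ?thesis by (simp add: eq_neg_iff_add_eq_0 add.commute)
qed

lemma mob:
  fixes a x :: 'b
  shows "((a*x+1)/(x+a))^q = (a^q*x^q+1)/(x^q+a^q)"
  by (simp add: power_divide F power_mult_distrib)

lemma den: "x + a \<noteq> 0 \<Longrightarrow> x^q + a^q \<noteq> (0::'b)"
  by (metis F power_eq_0_iff qpos not_gr_zero)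

lemma P1_P1:
  fixes a :: 'b
  assumes "a^q = a" "P \<in> P1_Fq q"
  shows "rho a P \<in> P1_Fq q"
proof (cases P)
  case None
  then show ?thesis using assms by (simp add: rho_def P1_Fq_def)
next
  case (Some x)
  then have xq: "x^q = x" using assms by (auto simp: P1_Fq_def)
  show ?thesis
  proof (cases "x + a = 0")
    case True then show ?thesis using Some by (simp add: rho_def P1_Fq_def)
  next
    case False
    have yq: "((a*x+1)/(x+a))^q = (a*x+1)/(x+a)" by (simp add: mob xq assms(1))
    have "rho a P = Some ((a*x+1)/(x+a))" using Some False by (simp add: rho_def)
    then show ?thesis using yq unfolding P1_Fq_def by blast
  qed
qed

lemma mu_mu:
  fixes a :: 'b
  assumes "a^q = a" "a^2 \<noteq> 1" "P \<in> mu q"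
  shows "rho a P \<in> mu q"
proof -
  obtain x where P: "P = Some x" and x: "x^q * x = 1" using assms(3) by (auto simp: mu_def mult.commute)
  have xa: "x + a \<noteq> 0"
  proof
    assume "x + a = 0"
    then have "x = -a" by (simp add: eq_neg_iff_add_eq_0)
    then have "x^q * x = a * a" using neg assms(1) by simp
    then show False using x assms(2) by (simp add: power2_eq_square)
  qed
  have d: "x^q + a \<noteq> 0" using den[OF xa] assms(1) by simp
  have "((a*x+1)/(x+a))^(q+1) = ((a*x+1)/(x+a))^q * ((a*x+1)/(x+a))" by simp
  also have "\<dots> = (a*x^q+1)/(x^q+a) * ((a*x+1)/(x+a))" by (simp add: mob assms(1))
  also have "\<dots> = ((a*x^q+1)*(a*x+1)) / ((x^q+a)*(x+a))" by simp
  also have "(a*x^q+1)*(a*x+1) = (x^q+a)*(x+a)"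
  proof -
    have "(a*x^q+1)*(a*x+1) = a*a*(x^q*x) + a*x^q + a*x + 1" by (simp add: algebra_simps)
    also have "\<dots> = (x^q*x) + a*x^q + a*x + a*a" using x by simp
    also have "\<dots> = (x^q+a)*(x+a)" by (simp add: algebra_simps)
    finally show ?thesis .
  qed
  finally have yq: "((a*x+1)/(x+a))^(q+1) = 1" using d xa by simp
  have "rho a P = Some ((a*x+1)/(x+a))" using P xa by (simp add: rho_def)
  then show ?thesis using yq unfolding mu_def by blast
qed

lemma P1_mu:
  fixes a :: 'b
  assumes "a^q * a = 1" "P \<in> P1_Fq q" "a^2 \<noteq> 1"
  shows "rho a P \<in> mu q"
proof (cases P)
  case None
  then show ?thesis using assms by (simp add: rho_def mu_def mult.commute)
next
  case (Some x)
  then have xq: "x^q = x" using assms by (auto simp: P1_Fq_def)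
  show ?thesis
  proof (cases "x + a = 0")
    case True
    then have "x = -a" by (simp add: eq_neg_iff_add_eq_0)
    then have "a^q = a" using xq neg by simp
    then have "a * a = 1" using assms(1) by simp
    then show ?thesis using assms(3) by (simp add: power2_eq_square)
  next
    case xa: False
    have d: "x + a^q \<noteq> 0" using den[OF xa] xq by simp
    have "((a*x+1)/(x+a))^(q+1) = ((a*x+1)/(x+a))^q * ((a*x+1)/(x+a))" by simp
    also have "\<dots> = (a^q*x+1)/(x+a^q) * ((a*x+1)/(x+a))" by (simp add: mob xq)
    also have "\<dots> = ((a^q*x+1)*(a*x+1)) / ((x+a^q)*(x+a))" by simp
    also have "(a^q*x+1)*(a*x+1) = (x+a^q)*(x+a)"
    proof -
      have "(a^q*x+1)*(a*x+1) = (a^q*a)*x*x + a^q*x + a*x + 1" by (simp add: algebra_simps)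
      also have "\<dots> = x*x + a^q*x + a*x + a^q*a" using assms(1) by simp
      also have "\<dots> = (x+a^q)*(x+a)" by (simp add: algebra_simps)
      finally show ?thesis .
    qed
    finally have yq: "((a*x+1)/(x+a))^(q+1) = 1" using d xa by simp
    have "rho a P = Some ((a*x+1)/(x+a))" using Some xa by (simp add: rho_def)
    then show ?thesis using yq unfolding mu_def by blast
  qed
qed

lemma mu_P1:
  fixes a :: 'b
  assumes "a^q * a = 1" "P \<in> mu q"
  shows "rho a P \<in> P1_Fq q"
proof -
  obtain x where P: "P = Some x" and x: "x^q * x = 1" using assms(2) by (auto simp: mu_def mult.commute)
  show ?thesis
  proof (cases "x + a = 0")
    case True then show ?thesis using P by (simp add: rho_def P1_Fq_def)
  next
    case xa: False
    have d: "x^q + a^q \<noteq> 0" using den[OF xa] .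
    have x0: "x \<noteq> 0" using x by auto
    have a0: "a \<noteq> 0" using assms(1) by auto
    have "((a*x+1)/(x+a))^q = (a^q*x^q+1)/(x^q+a^q)" by (rule mob)
    also have "\<dots> = (a*x+1)/(x+a)"
    proof -
      have "(a^q*x^q+1)*(x+a) = (a*x+1)*(x^q+a^q)"
      proof -
        have "a*x*((a^q*x^q+1)*(x+a)) = (a^q*a)*(x^q*x)*(x+a) + a*x*(x+a)"
          by (simp add: algebra_simps)
        also have "\<dots> = (x+a) + a*x*(x+a)" using x assms(1) by simp
        also have "\<dots> = a*x*((a*x+1)*(x^q+a^q))"
        proof -
          have "a*x*((a*x+1)*(x^q+a^q)) = (a*x+1)*(a*(x^q*x) + x*(a^q*a))"
            by (simp add: algebra_simps)
          also have "\<dots> = (a*x+1)*(a+x)" using x assms(1) by simp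
          finally show ?thesis by (simp add: algebra_simps)
        qed
        finally show ?thesis using a0 x0 by simp
      qed
      then show ?thesis using d xa by (simp add: frac_eq_eq)
    qed
    finally have yq: "((a*x+1)/(x+a))^q = (a*x+1)/(x+a)" .
    have "rho a P = Some ((a*x+1)/(x+a))" using P xa by (simp add: rho_def)
    then show ?thesis using yq unfolding P1_Fq_def by blast
  qed
qed

end

theorem corollary2p5:
  fixes \<omega> :: "'a::alg_closed_field" and p n q :: nat
  assumes char: "prime p" "CHAR('a) = p"
    and algebraic: "\<forall>x::'a. \<exists>k>0. x ^ (p ^ k) = x"
    and qdef: "q = p ^ n" "n > 0"
    and coprime3: "gcd 3 q = 1"
    and omega: "\<omega>\<^sup>2 + \<omega> + 1 = 0"
  shows "(q mod 3 = 1 \<longrightarrow>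
            bij_betw (rho \<omega>) (P1_Fq q) (P1_Fq q) \<and> bij_betw (rho \<omega>) (mu q) (mu q))
       \<and> (q mod 3 = 2 \<longrightarrow>
            rho \<omega> ` (P1_Fq q) = mu q \<and> rho \<omega> ` (mu q) = P1_Fq q)
       \<and> (even q \<longrightarrow> (\<forall>P. rho \<omega> (rho \<omega> P) = P))"
proof -
  have qpos: "q > 0" using qdef char(1) prime_gt_0_nat by simp
  have pc: "prime CHAR('a)" using char by simp
  have F: "\<And>x y::'a. (x + y) ^ q = x ^ q + y ^ q"
    using freshmans_dream'[OF pc, of q n] qdef char(2) by simp
  have p3: "p \<noteq> 3"
  proof
    assume "p = 3"
    then have "3 dvd q" using qdef by (simp add: dvd_power)
    then have "3 dvd gcd 3 q" by simp
    then show False using coprime3 by simp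
  qed
  have w3: "\<omega>^3 = 1"
  proof -
    have "\<omega>^3 - 1 = (\<omega> - 1) * (\<omega>\<^sup>2 + \<omega> + 1)" by (simp add: algebra_simps power2_eq_square power3_eq_cube)
    then show ?thesis using omega by simp
  qed
  have w2: "\<omega>^2 \<noteq> 1"
  proof
    assume h: "\<omega>^2 = 1"
    then have "\<omega> = -2" using omega by (simp add: algebra_simps eq_neg_iff_add_eq_0)
    then have "(4::'a) = 1" using h by (simp add: power2_eq_square)
    then have "(3::'a) + 1 = 0 + 1" by simp
    then have "(3::'a) = 0" by (rule add_right_imp_eq)
    then have "(of_nat 3 :: 'a) = 0" by simp
    then have "CHAR('a) dvd 3" by (simp only: of_nat_eq_0_iff_char_dvd)
    then have "p dvd 3" using char(2) by simp
    then have "p = 3" using char(1) primes_dvd_imp_eq[of p 3] by simp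
    then show False using p3 by simp
  qed
  have wpow: "\<omega>^q = \<omega>^(q mod 3)"
  proof -
    have "\<omega>^q = \<omega>^(3*(q div 3) + q mod 3)" by simp
    also have "\<dots> = (\<omega>^3)^(q div 3) * \<omega>^(q mod 3)" by (simp only: power_add power_mult)
    finally have "\<omega>^q = (\<omega>^3)^(q div 3) * \<omega>^(q mod 3)" .
    then show ?thesis using w3 by simp
  qed
  have w2': "(-\<omega>)^2 \<noteq> 1" using w2 by simp
  have case1: "q mod 3 = 1 \<longrightarrow>
            bij_betw (rho \<omega>) (P1_Fq q) (P1_Fq q) \<and> bij_betw (rho \<omega>) (mu q) (mu q)"
  proof
    assume m: "q mod 3 = 1"
    have a1: "\<omega>^q = \<omega>" using wpow m by simp
    have a2: "(-\<omega>)^q = -\<omega>" using a1 neg[OF qpos F] by simp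
    have i1: "\<And>P. rho (-\<omega>) (rho \<omega> P) = P" using rho_inv[OF w2] .
    have i2: "\<And>P. rho \<omega> (rho (-\<omega>) P) = P" using rho_inv[OF w2'] by simp
    show "bij_betw (rho \<omega>) (P1_Fq q) (P1_Fq q) \<and> bij_betw (rho \<omega>) (mu q) (mu q)"
      by (intro conjI bij_betw_byWitness[where f'="rho (-\<omega>)"])
         (auto simp: i1 i2 P1_P1[OF qpos F, OF a1] P1_P1[OF qpos F, OF a2] mu_mu[OF qpos F, OF a1 w2] mu_mu[OF qpos F, OF a2 w2'])
  qed
  have case2: "q mod 3 = 2 \<longrightarrow>
            rho \<omega> ` (P1_Fq q) = mu q \<and> rho \<omega> ` (mu q) = P1_Fq q"
  proof
    assume m: "q mod 3 = 2"
    have a1: "\<omega>^q * \<omega> = 1" using wpow m w3 by (simp add: power3_eq_cube power2_eq_square)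
    have a2: "(-\<omega>)^q * (-\<omega>) = 1" using a1 neg[OF qpos F] by simp
    have i2: "\<And>P. rho \<omega> (rho (-\<omega>) P) = P" using rho_inv[OF w2'] by simp
    have s1: "rho \<omega> ` (P1_Fq q) = mu q"
    proof
      show "rho \<omega> ` P1_Fq q \<subseteq> mu q" using P1_mu[OF qpos F, OF a1 _ w2] by auto
      show "mu q \<subseteq> rho \<omega> ` P1_Fq q"
      proof
        fix P :: "'a option" assume "P \<in> mu q"
        then have "rho (-\<omega>) P \<in> P1_Fq q" using mu_P1[OF qpos F, OF a2] by auto
        then show "P \<in> rho \<omega> ` P1_Fq q" using i2[of P] by (metis image_eqI)
      qed
    qed
    have s2: "rho \<omega> ` (mu q) = P1_Fq q"
    proof
      show "rho \<omega> ` mu q \<subseteq> P1_Fq q" using mu_P1[OF qpos F, OF a1] by auto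
      show "P1_Fq q \<subseteq> rho \<omega> ` mu q"
      proof
        fix P :: "'a option" assume "P \<in> P1_Fq q"
        then have "rho (-\<omega>) P \<in> mu q" using P1_mu[OF qpos F, OF a2 _ w2'] by auto
        then show "P \<in> rho \<omega> ` mu q" using i2[of P] by (metis image_eqI)
      qed
    qed
    show "rho \<omega> ` (P1_Fq q) = mu q \<and> rho \<omega> ` (mu q) = P1_Fq q" using s1 s2 by simp
  qed
  have case3: "even q \<longrightarrow> (\<forall>P. rho \<omega> (rho \<omega> P) = P)"
  proof
    assume "even q"
    then have "2 dvd p ^ n" using qdef by simp
    then have "2 dvd p" using prime_dvd_power_nat[of 2 p n] by simp
    then have "p = 2" using char(1) primes_dvd_imp_eq[of 2 p] by simp
    then have "CHAR('a) dvd 2" using char(2) by simp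
    then have "(of_nat 2 :: 'a) = 0" by (simp only: of_nat_eq_0_iff_char_dvd)
    then have "\<omega> + \<omega> = 0" by (simp add: mult_2[symmetric])
    then have mw: "-\<omega> = \<omega>" by (simp add: eq_neg_iff_add_eq_0)
    show "\<forall>P. rho \<omega> (rho \<omega> P) = P" using rho_inv[OF w2, unfolded mw] by blast
  qed
  show ?thesis using case1 case2 case3 by blast
qed

end
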